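(* Let $G,D\subsetneq\mathbb{R}^n$ be domains and $1\le p<\infty$. Let $f:G\to D$ be a surjective mapping and $L\ge1$ such that \[ b_{G,p}(z_1,z_2)/L\le b_{D,p}(f(z_1),f(z_2))\le L\,b_{G,p}(z_1,z_2)\quad\text{for all } z_1,z_2\in G. \] Then $f$ is a quasiconformal homeomorphism (either sense-preserving or sense-reversing), and its linear dilatation satisfies $H_f(z)\le 4^{1-\frac1p}L^2$ for all $z\in G$.
   Context: For a domain $G\subsetneq\mathbb{R}^n$, $p\ge1$ and $z_1,z_2\in G$, $b_{G,p}(z_1,z_2)=\sup_{z\in\partial G}\frac{|z_1-z_2|}{\sqrt[p]{|z_1-z|^p+|z-z_2|^p}}$. For a homeomorphism $f$ and $z\in G$, the linear dilatation is $H_f(z)=\limsup_{r\to0}\frac{L_f(z,r)}{l_f(z,r)}$, where $L_f(z,r)=\sup\{|f(z_1)-f(z)|:|z_1-z|=r\}$ and $l_f(z,r)=\inf\{|f(z_1)-f(z)|:|z_1-z|=r\}$. *)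

theory Defs
  imports "HOL-Analysis.Analysis"
begin

definition is_domain :: "'a::euclidean_space set \<Rightarrow> bool" where
  "is_domain G \<longleftrightarrow> open G \<and> connected G \<and> G \<noteq> {}"

definition b_metric :: "'a::euclidean_space set \<Rightarrow> real \<Rightarrow> 'a \<Rightarrow> 'a \<Rightarrow> real" where
  "b_metric G p z1 z2 =
     (SUP z\<in>frontier G. dist z1 z2 / ((dist z1 z) powr p + (dist z z2) powr p) powr (1 / p))"

definition Lmax :: "('a::euclidean_space \<Rightarrow> 'b::euclidean_space) \<Rightarrow> 'a \<Rightarrow> real \<Rightarrow> real" where
  "Lmax f z r = (SUP z1\<in>sphere z r. dist (f z1) (f z))"

definition lmin :: "('a::euclidean_space \<Rightarrow> 'b::euclidean_space) \<Rightarrow> 'a \<Rightarrow> real \<Rightarrow> real" where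
  "lmin f z r = (INF z1\<in>sphere z r. dist (f z1) (f z))"

definition lin_dil :: "('a::euclidean_space \<Rightarrow> 'b::euclidean_space) \<Rightarrow> 'a \<Rightarrow> ereal" where
  "lin_dil f z = Limsup (at_right 0) (\<lambda>r. ereal (Lmax f z r / lmin f z r))"

text \<open>Quasiconformal homeomorphism (metric definition): a homeomorphism of G onto D
  whose linear dilatation is bounded in G.\<close>
definition qc_homeomorphism :: "('a::euclidean_space \<Rightarrow> 'a) \<Rightarrow> 'a set \<Rightarrow> 'a set \<Rightarrow> bool" where
  "qc_homeomorphism f G D \<longleftrightarrow>
     (\<exists>g. homeomorphism G D f g) \<and> (\<exists>K::real. \<forall>z\<in>G. lin_dil f z \<le> ereal K)"

end

theory Submission
  imports Defs
begin

lemma M_mono: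
  fixes p a b a' b' :: real
  assumes "p > 0" "0 \<le> a" "a \<le> a'" "0 \<le> b" "b \<le> b'"
  shows "(a powr p + b powr p) powr (1/p) \<le> (a' powr p + b' powr p) powr (1/p)"
proof -
  have "a powr p \<le> a' powr p" using assms by (intro powr_mono2) auto
  moreover have "b powr p \<le> b' powr p" using assms by (intro powr_mono2) auto
  ultimately show ?thesis using assms by (intro powr_mono2) auto
qed

lemma M_diag:
  fixes p c :: real
  assumes "p > 0" "0 \<le> c"
  shows "(c powr p + c powr p) powr (1/p) = 2 powr (1/p) * c"
proof -
  have "(c powr p + c powr p) powr (1/p) = (2 * c powr p) powr (1/p)" by simp
  also have "\<dots> = 2 powr (1/p) * (c powr p) powr (1/p)"
    using assms by (simp add: powr_mult)
  also have "(c powr p) powr (1/p) = c"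
    using assms by (simp add: powr_powr)
  finally show ?thesis .
qed

lemma M_ge_max:
  fixes p a b :: real
  assumes "p > 0" "0 \<le> a" "0 \<le> b"
  shows "max a b \<le> (a powr p + b powr p) powr (1/p)"
proof -
  have "max a b powr p \<le> a powr p + b powr p"
    using assms by (cases "a \<le> b") (auto simp: max_def)
  hence "(max a b powr p) powr (1/p) \<le> (a powr p + b powr p) powr (1/p)"
    using assms by (intro powr_mono2) auto
  moreover have "(max a b powr p) powr (1/p) = max a b"
    using assms by (simp add: powr_powr)
  ultimately show ?thesis by simp
qed

lemma bterm_le2:
  fixes x y z :: "'a::euclidean_space" and p :: real
  assumes "p > 0"
  shows "dist x y / (dist x z powr p + dist z y powr p) powr (1/p) \<le> 2"
proof -
  let ?m = "max (dist x z) (dist z y)"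
  have m: "?m \<le> (dist x z powr p + dist z y powr p) powr (1/p)"
    using M_ge_max[OF assms] by simp
  have r: "dist x y \<le> 2 * ?m" using dist_triangle[of x y z] by (simp add: max_def)
  show ?thesis
  proof (cases "?m = 0")
    case True
    then have "dist x y = 0" using r by simp
    then show ?thesis by simp
  next
    case False
    have "?m \<ge> 0" by (simp add: le_max_iff_disj)
    then have mp: "?m > 0" using False by linarith
    have "dist x y / (dist x z powr p + dist z y powr p) powr (1/p) \<le> dist x y / ?m"
    proof (rule divide_left_mono)
      show "0 < (dist x z powr p + dist z y powr p) powr (1/p) * ?m"
        using m mp by (intro mult_pos_pos) linarith+
    qed (use m in auto)
    also have "\<dots> \<le> 2" using r mp by (simp add: divide_simps)
    finally show ?thesis .
  qed
qed

lemma bterm_bdd: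
  fixes x y :: "'a::euclidean_space" and p :: real
  assumes "p > 0"
  shows "bdd_above ((\<lambda>z. dist x y / (dist x z powr p + dist z y powr p) powr (1/p)) ` S)"
  using bterm_le2[OF assms] by (intro bdd_aboveI[where M=2]) auto

lemma b_upper:
  fixes x y :: "'a::euclidean_space" and p d :: real
  assumes "p > 0" "frontier A \<noteq> {}" "\<forall>w\<in>frontier A. d \<le> dist x w" "dist x y < d"
  shows "b_metric A p x y \<le> dist x y / (2 powr (1/p) * (d - dist x y))"
  unfolding b_metric_def
proof (rule cSUP_least[OF assms(2)])
  fix w assume w: "w \<in> frontier A"
  let ?r = "dist x y"
  have a: "d \<le> dist x w" using assms w by auto
  have c: "d - ?r \<le> dist w y" using a dist_triangle[of x w y] by (simp add: dist_commute)
  have "(2 powr (1/p) * (d - ?r)) = ((d - ?r) powr p + (d - ?r) powr p) powr (1/p)"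
    using M_diag[of p "d - ?r"] assms by simp
  also have "\<dots> \<le> (dist x w powr p + dist w y powr p) powr (1/p)"
    using assms a c zero_le_dist[of x y] by (intro M_mono) linarith+
  finally have le: "2 powr (1/p) * (d - ?r) \<le> (dist x w powr p + dist w y powr p) powr (1/p)" .
  have pos: "0 < 2 powr (1/p) * (d - ?r)" using assms by simp
  show "?r / (dist x w powr p + dist w y powr p) powr (1/p) \<le> ?r / (2 powr (1/p) * (d - ?r))"
    using le pos by (intro divide_left_mono) (auto intro!: mult_pos_pos)
qed

lemma b_lower:
  fixes x y w0 :: "'a::euclidean_space" and p d :: real
  assumes "p > 0" "w0 \<in> frontier A" "dist x w0 = d"
  shows "dist x y / (2 powr (1/p) * (d + dist x y)) \<le> b_metric A p x y"
  unfolding b_metric_def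
proof (rule cSUP_upper2[OF bterm_bdd[OF assms(1)] assms(2)])
  let ?r = "dist x y"
  let ?M = "(dist x w0 powr p + dist w0 y powr p) powr (1/p)"
  show "?r / (2 powr (1/p) * (d + ?r)) \<le> ?r / ?M"
  proof (cases "?r = 0")
    case True then show ?thesis by simp
  next
    case False
    then have rp: "?r > 0" by simp
    have c: "dist w0 y \<le> d + ?r" using assms dist_triangle[of w0 y x] by (simp add: dist_commute)
    have "?M \<le> ((d + ?r) powr p + (d + ?r) powr p) powr (1/p)"
      using assms c by (intro M_mono) auto
    also have "\<dots> = 2 powr (1/p) * (d + ?r)" using assms by (intro M_diag) auto
    finally have le: "?M \<le> 2 powr (1/p) * (d + ?r)" .
    have "max (dist x w0) (dist w0 y) > 0"
      using rp dist_triangle[of x y w0] by (auto simp: max_def)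
    moreover have "max (dist x w0) (dist w0 y) \<le> ?M" using assms by (intro M_ge_max) auto
    ultimately have Mp: "?M > 0" by linarith
    show ?thesis
    proof (rule divide_left_mono)
      show "0 < 2 powr (1/p) * (d + ?r) * ?M"
      proof (intro mult_pos_pos)
        show "0 < d + ?r" using rp assms(3) zero_le_dist[of x w0] by linarith
      qed (use Mp in simp_all)
    qed (use le in auto)
  qed
qed
lemma frac_cross:
  fixes a b c e :: real
  assumes "b > 0" "e > 0" "a / b \<le> c / e"
  shows "a * e \<le> c * b"
proof -
  have "a / b * (b * e) \<le> c / e * (b * e)"
    using assms by (intro mult_right_mono) auto
  moreover have "a / b * (b * e) = a * e" using assms by simp
  moreover have "c / e * (b * e) = c * b" using assms by simp
  ultimately show ?thesis by simp
qed

lemma key_ineq: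
  fixes x y u v w0 :: "'a::euclidean_space" and p d d' L :: real
  assumes "p > 0" "L \<ge> 0" "frontier A \<noteq> {}" "\<forall>w\<in>frontier A. d \<le> dist x w"
    "dist x y < d" "w0 \<in> frontier B" "dist u w0 = d'"
    "b_metric B p u v \<le> L * b_metric A p x y"
  shows "dist u v * (d - dist x y) \<le> L * dist x y * (d' + dist u v)"
proof -
  let ?K = "2 powr (1/p)" and ?r = "dist x y" and ?s = "dist u v"
  have K: "?K > 0" by simp
  have "?s / (?K * (d' + ?s)) \<le> b_metric B p u v" using b_lower[OF assms(1,6,7)] .
  also have "\<dots> \<le> L * b_metric A p x y" by fact
  also have "\<dots> \<le> L * (?r / (?K * (d - ?r)))"
    using b_upper[OF assms(1,3,4,5)] assms(2) by (intro mult_left_mono) auto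
  finally have ineq: "?s / (?K * (d' + ?s)) \<le> L * (?r / (?K * (d - ?r)))" .
  have d'0: "d' \<ge> 0" using assms(7) zero_le_dist[of u w0] by linarith
  show ?thesis
  proof (cases "?s = 0")
    case True
    then show ?thesis using assms(2) d'0 by simp
  next
    case False
    then have sp: "?s > 0" by simp
    have dr: "d - ?r > 0" using assms(5) by simp
    have ds: "d' + ?s > 0" using sp d'0 by linarith
    have ineq2: "?s / (?K * (d' + ?s)) \<le> (L * ?r) / (?K * (d - ?r))" using ineq by simp
    have "?s * (?K * (d - ?r)) \<le> L * ?r * (?K * (d' + ?s))"
      using frac_cross[OF _ _ ineq2] K dr ds by simp
    then have "?K * (?s * (d - ?r)) \<le> ?K * (L * ?r * (d' + ?s))"
      by (simp add: algebra_simps)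
    then show ?thesis using K by simp
  qed
qed

lemma near:
  fixes x :: "'a::euclidean_space"
  assumes "open A" "A \<noteq> {}" "A \<noteq> UNIV" "x \<in> A"
  obtains d w0 where "d > 0" "w0 \<in> frontier A" "dist x w0 = d"
    "\<forall>w\<in>frontier A. d \<le> dist x w" "ball x d \<subseteq> A"
proof -
  have fne: "frontier A \<noteq> {}" using frontier_not_empty assms by blast
  obtain w0 where w0: "w0 \<in> frontier A" "\<And>w. w \<in> frontier A \<Longrightarrow> dist x w0 \<le> dist x w"
    using distance_attains_inf[OF frontier_closed fne] by metis
  have "w0 \<notin> A" using w0(1) assms(1) by (simp add: frontier_def interior_open)
  then have "x \<noteq> w0" using assms(4) by auto
  then have dpos: "dist x w0 > 0" by simp
  have "ball x (dist x w0) \<subseteq> A"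
  proof (rule ccontr)
    assume "\<not> ball x (dist x w0) \<subseteq> A"
    then have "ball x (dist x w0) - A \<noteq> {}" by blast
    moreover have "x \<in> ball x (dist x w0) \<inter> A" using assms(4) dpos by simp
    then have "ball x (dist x w0) \<inter> A \<noteq> {}" by blast
    ultimately have "ball x (dist x w0) \<inter> frontier A \<noteq> {}"
      using connected_Int_frontier[of "ball x (dist x w0)" A] by auto
    then obtain w where "w \<in> frontier A" "dist x w < dist x w0" by auto
    then show False using w0(2) by fastforce
  qed
  then show ?thesis using that[of "dist x w0" w0] dpos w0 by auto
qed

lemma local_lip:
  fixes h :: "'a::euclidean_space \<Rightarrow> 'a" and p L :: real
  assumes "p > 0" "L \<ge> 0" "open A" "A \<noteq> {}" "A \<noteq> UNIV" "frontier B \<noteq> {}" "x \<in> A"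
    "\<forall>y\<in>A. b_metric B p (h x) (h y) \<le> L * b_metric A p x y"
  shows "\<exists>\<delta>>0. \<exists>C. \<forall>y. dist x y < \<delta> \<longrightarrow> dist (h x) (h y) \<le> C * dist x y"
proof -
  obtain d w0 where d: "d > 0" "w0 \<in> frontier A" "dist x w0 = d"
    "\<forall>w\<in>frontier A. d \<le> dist x w" "ball x d \<subseteq> A"
    using near[OF assms(3,4,5,7)] by blast
  have fA: "frontier A \<noteq> {}" using d(2) by auto
  obtain w1 where w1: "w1 \<in> frontier B"
    using assms(6) by auto
  define d' where "d' = dist (h x) w1"
  have d'0: "d' \<ge> 0" unfolding d'_def by simp
  define \<delta> where "\<delta> = d / (2 * (1 + L))"
  have \<delta>pos: "\<delta> > 0" unfolding \<delta>_def using d(1) assms(2) by simp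
  have "\<forall>y. dist x y < \<delta> \<longrightarrow> dist (h x) (h y) \<le> (2 * L * d' / d) * dist x y"
  proof (intro allI impI)
    fix y assume y: "dist x y < \<delta>"
    let ?r = "dist x y" and ?s = "dist (h x) (h y)"
    have "?r * (2 * (1 + L)) < d" using y assms(2) unfolding \<delta>_def
      by (subst (asm) pos_less_divide_eq) auto
    then have r1: "?r * (1 + L) < d / 2" by (simp add: algebra_simps)
    have "?r \<le> ?r * (1 + L)" using assms(2) by (simp add: algebra_simps)
    then have rd: "?r < d" using r1 d(1) by linarith
    then have yA: "y \<in> A" using d(5) by auto
    have k: "?s * (d - ?r) \<le> L * ?r * (d' + ?s)"
      using key_ineq[OF assms(1,2) fA d(4) rd w1 d'_def[symmetric]] assms(8) yA by blast
    have "?s * (d / 2) \<le> ?s * (d - ?r - L * ?r)"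
      using r1 by (intro mult_left_mono) (auto simp: algebra_simps)
    also have "\<dots> \<le> L * ?r * d'" using k by (simp add: algebra_simps)
    finally have "?s * (d / 2) \<le> L * ?r * d'" .
    then show "?s \<le> (2 * L * d' / d) * ?r" using d(1) by (simp add: field_simps)
  qed
  then show ?thesis using \<delta>pos by blast
qed

lemma cont_from_lip:
  fixes h :: "'a::euclidean_space \<Rightarrow> 'a"
  assumes "\<forall>x\<in>A. \<exists>\<delta>>0. \<exists>C. \<forall>y. dist x y < \<delta> \<longrightarrow> dist (h x) (h y) \<le> C * dist x y"
  shows "continuous_on A h"
  unfolding continuous_on_iff
proof (intro ballI allI impI)
  fix x e assume x: "x \<in> A" and e: "(0::real) < e"
  obtain \<delta> C where \<delta>: "\<delta> > 0" "\<forall>y. dist x y < \<delta> \<longrightarrow> dist (h x) (h y) \<le> C * dist x y"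
    using assms x by blast
  define \<delta>' where "\<delta>' = min \<delta> (e / (\<bar>C\<bar> + 1))"
  have "\<delta>' > 0" unfolding \<delta>'_def using \<delta> e by (simp add: add_pos_nonneg)
  moreover have "\<forall>y\<in>A. dist y x < \<delta>' \<longrightarrow> dist (h y) (h x) < e"
  proof (intro ballI impI)
    fix y assume "y \<in> A" "dist y x < \<delta>'"
    then have y1: "dist x y < \<delta>" and y2: "dist x y < e / (\<bar>C\<bar> + 1)"
      unfolding \<delta>'_def by (auto simp: dist_commute)
    have "dist (h y) (h x) \<le> C * dist x y" using \<delta>(2) y1 by (metis dist_commute)
    also have "\<dots> \<le> \<bar>C\<bar> * dist x y" by (simp add: mult_right_mono)
    also have "\<dots> \<le> (\<bar>C\<bar> + 1) * dist x y" by (simp add: mult_right_mono)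
    also have "\<dots> < e" using y2 by (simp add: field_simps add_pos_nonneg)
    finally show "dist (h y) (h x) < e" .
  qed
  ultimately show "\<exists>d>0. \<forall>x'\<in>A. dist x' x < d \<longrightarrow> dist (h x') (h x) < e" by blast
qed


lemma alg_id:
  fixes L r a b c e :: real
  assumes "r \<noteq> 0" "L \<noteq> 0" "b \<noteq> 0" "c \<noteq> 0" "e \<noteq> 0"
  shows "(L * r * a / c) / (r * b / (L * e)) = L\<^sup>2 * a * e / (c * b)"
  using assms by (simp add: field_simps power2_eq_square)

lemma dil_bound:
  fixes f :: "'a::euclidean_space \<Rightarrow> 'a" and p L :: real
  assumes "p > 0" "L > 0" "open G" "G \<noteq> {}" "G \<noteq> UNIV" "open D" "D \<noteq> {}" "D \<noteq> UNIV"
    "x \<in> G" "f x \<in> D"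
    "\<forall>y\<in>G. b_metric D p (f x) (f y) \<le> L * b_metric G p x y"
    "\<forall>y\<in>G. b_metric G p x y \<le> L * b_metric D p (f x) (f y)"
  shows "lin_dil f x \<le> ereal (L\<^sup>2)"
proof -
  obtain d w0 where d: "d > 0" "w0 \<in> frontier G" "dist x w0 = d"
    "\<forall>w\<in>frontier G. d \<le> dist x w" "ball x d \<subseteq> G"
    using near[OF assms(3,4,5,9)] by blast
  obtain d' w0' where d': "d' > 0" "w0' \<in> frontier D" "dist (f x) w0' = d'"
    "\<forall>w\<in>frontier D. d' \<le> dist (f x) w" "ball (f x) d' \<subseteq> D"
    using near[OF assms(6,7,8,10)] by blast
  have fG: "frontier G \<noteq> {}" using d(2) by auto
  have fD: "frontier D \<noteq> {}" using d'(2) by auto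
  have L0: "L \<ge> 0" using assms(2) by simp
  have key1: "dist (f x) (f y) * (d - dist x y) \<le> L * dist x y * (d' + dist (f x) (f y))"
    if "dist x y < d" for y
  proof -
    have "y \<in> G" using that d(5) by auto
    then show ?thesis using key_ineq[OF assms(1) L0 fG d(4) that d'(2,3)] assms(11) by blast
  qed
  have key2: "dist x y * (d' - dist (f x) (f y)) \<le> L * dist (f x) (f y) * (d + dist x y)"
    if "y \<in> G" "dist (f x) (f y) < d'" for y
    using key_ineq[OF assms(1) L0 fD d'(4) that(2) d(2,3)] assms(12) that(1) by blast
  define r0 where "r0 = d / (4 * (1 + L))"
  have r0pos: "r0 > 0" unfolding r0_def using d(1) L0 by simp
  define S where "S = (\<lambda>r. Lmax f x r)"
  define Gf where "Gf = (\<lambda>r. L\<^sup>2 * (d' + S r) * (d + r) / ((d - r) * (d' - S r)))"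
  have bound: "0 \<le> S r \<and> S r \<le> 2 * L * d' / d * r \<and> Lmax f x r / lmin f x r \<le> Gf r"
    if r: "0 < r" "r < r0" for r
  proof -
    have "r * (4 * (1 + L)) < d" using r unfolding r0_def
      by (subst (asm) pos_less_divide_eq) (use L0 in auto)
    then have r1: "r * (1 + L) < d / 4" by (simp add: algebra_simps)
    have "r \<le> r * (1 + L)" using L0 r by (simp add: algebra_simps)
    then have rd: "r < d / 4" using r1 by linarith
    have Lr: "L * r < d / 4" using r1 r by (simp add: algebra_simps)
    have sne: "sphere x r \<noteq> {}" using r by simp
    have sub: "sphere x r \<subseteq> ball x d" using rd r by auto
    define T where "T = 2 * L * d' / d * r"
    have sT: "dist (f y) (f x) \<le> T" if y: "y \<in> sphere x r" for y
    proof -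
      let ?s = "dist (f x) (f y)"
      have dy: "dist x y = r" using y by simp
      have "dist x y < d" using dy rd d(1) by linarith
      then have k: "?s * (d - r) \<le> L * r * (d' + ?s)" using key1[of y] dy by simp
      have "?s * (d / 2) \<le> ?s * (d - r - L * r)"
        using rd Lr by (intro mult_left_mono) auto
      also have "\<dots> \<le> L * r * d'" using k by (simp add: algebra_simps)
      finally have "?s * (d / 2) \<le> L * r * d'" .
      then have "?s \<le> T" unfolding T_def using d(1) by (simp add: field_simps)
      then show ?thesis by (simp add: dist_commute)
    qed
    have bdd: "bdd_above ((\<lambda>y. dist (f y) (f x)) ` sphere x r)"
      using sT by (intro bdd_aboveI[where M=T]) auto
    have sS: "dist (f y) (f x) \<le> S r" if "y \<in> sphere x r" for y
      unfolding S_def Lmax_def using that bdd by (rule cSUP_upper)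
    have ST: "S r \<le> T" unfolding S_def Lmax_def using sne sT by (rule cSUP_least)
    obtain y0 where "y0 \<in> sphere x r" using sne by blast
    then have S0: "0 \<le> S r" using sS[of y0] zero_le_dist[of "f y0" "f x"] by linarith
    have "T < d'" unfolding T_def using Lr d(1) d'(1)
      by (simp add: field_simps)
    then have Sd': "S r < d'" using ST by linarith
    define U where "U = L * r * (d' + S r) / (d - r)"
    have sU: "dist (f y) (f x) \<le> U" if y: "y \<in> sphere x r" for y
    proof -
      let ?s = "dist (f x) (f y)"
      have dy: "dist x y = r" using y by simp
      have "dist x y < d" using dy rd d(1) by linarith
      then have k: "?s * (d - r) \<le> L * r * (d' + ?s)" using key1[of y] dy by simp
      have "?s \<le> S r" using sS[OF y] by (simp add: dist_commute)
      then have "L * r * (d' + ?s) \<le> L * r * (d' + S r)"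
        using L0 r by (intro mult_left_mono) auto
      then have "?s * (d - r) \<le> L * r * (d' + S r)" using k by linarith
      moreover have drpos: "d - r > 0" using rd d(1) by linarith
      ultimately have "?s \<le> U" unfolding U_def by (subst pos_le_divide_eq) auto
      then show ?thesis by (simp add: dist_commute)
    qed
    have SU: "S r \<le> U" unfolding S_def Lmax_def using sne sU by (rule cSUP_least)
    define m where "m = r * (d' - S r) / (L * (d + r))"
    have mpos: "m > 0" unfolding m_def using r Sd' assms(2) d(1) by simp
    have ms: "m \<le> dist (f y) (f x)" if y: "y \<in> sphere x r" for y
    proof -
      let ?s = "dist (f x) (f y)"
      have dy: "dist x y = r" using y by simp
      have yG: "y \<in> G" using y sub d(5) by auto
      have sle: "?s \<le> S r" using sS[OF y] by (simp add: dist_commute)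
      then have k: "r * (d' - ?s) \<le> L * ?s * (d + r)" using key2[OF yG] dy Sd' by simp
      have "r * (d' - S r) \<le> r * (d' - ?s)" using sle r by (intro mult_left_mono) auto
      then have "r * (d' - S r) \<le> ?s * (L * (d + r))" using k by (simp add: algebra_simps)
      then have "m \<le> ?s" unfolding m_def using assms(2) d(1) r
        by (subst pos_divide_le_eq) (auto intro: add_pos_pos)
      then show ?thesis by (simp add: dist_commute)
    qed
    have ml: "m \<le> lmin f x r" unfolding lmin_def using sne ms by (rule cINF_greatest)
    have "Lmax f x r / lmin f x r \<le> U / m"
      using S0 SU mpos ml unfolding S_def by (intro frac_le) auto
    also have "U / m = Gf r"
    proof -
      have n1: "d - r \<noteq> 0" "d' - S r \<noteq> 0" "d + r \<noteq> 0" "r \<noteq> 0" "L \<noteq> 0"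
        using rd r Sd' assms(2) d(1) by auto
      show ?thesis unfolding U_def m_def Gf_def using n1
        by (intro alg_id) auto
    qed
    finally show ?thesis using S0 ST unfolding T_def by simp
  qed
  have ev: "eventually (\<lambda>r. 0 < r \<and> r < r0) (at_right (0::real))"
    using r0pos by (auto simp: eventually_at_right_field)
  have Slim: "(S \<longlongrightarrow> 0) (at_right 0)"
  proof (rule tendsto_sandwich[of "\<lambda>r. 0" S _ "\<lambda>r. 2 * L * d' / d * r"])
    show "eventually (\<lambda>r. 0 \<le> S r) (at_right 0)" using ev by eventually_elim (use bound in blast)
    show "eventually (\<lambda>r. S r \<le> 2 * L * d' / d * r) (at_right 0)"
      using ev by eventually_elim (use bound in blast)
    have "((\<lambda>r. 2 * L * d' / d * r) \<longlongrightarrow> 2 * L * d' / d * 0) (at_right 0)"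
      by (intro tendsto_intros)
    then show "((\<lambda>r. 2 * L * d' / d * r) \<longlongrightarrow> 0) (at_right 0)" by simp
  qed simp
  have "(Gf \<longlongrightarrow> L\<^sup>2 * (d' + 0) * (d + 0) / ((d - 0) * (d' - 0))) (at_right 0)"
    unfolding Gf_def using d(1) d'(1) by (intro tendsto_intros Slim) auto
  then have Glim: "(Gf \<longlongrightarrow> L\<^sup>2) (at_right 0)" using d(1) d'(1) by simp
  have "lin_dil f x \<le> Limsup (at_right 0) (\<lambda>r. ereal (Gf r))"
    unfolding lin_dil_def
    by (rule Limsup_mono) (use ev in eventually_elim, use bound in auto)
  also have "\<dots> = ereal (L\<^sup>2)"
    by (rule lim_imp_Limsup) (use Glim in auto)
  finally show ?thesis .
qed


theorem theorem4p9:
  fixes G D :: "'a::euclidean_space set" and f :: "'a \<Rightarrow> 'a" and p L :: real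
  assumes "is_domain G" and "G \<noteq> UNIV"
    and "is_domain D" and "D \<noteq> UNIV"
    and "1 \<le> p"
    and "f ` G = D"
    and "1 \<le> L"
    and "\<forall>z1\<in>G. \<forall>z2\<in>G. b_metric G p z1 z2 / L \<le> b_metric D p (f z1) (f z2)
                          \<and> b_metric D p (f z1) (f z2) \<le> L * b_metric G p z1 z2"
  shows "qc_homeomorphism f G D \<and>
         (\<forall>z\<in>G. lin_dil f z \<le> ereal (4 powr (1 - 1 / p) * L\<^sup>2))"
proof -
  have p0: "p > 0" using assms(5) by simp
  have Lp: "L > 0" using assms(7) by simp
  have L0: "L \<ge> 0" using Lp by simp
  have oG: "open G" "G \<noteq> {}" using assms(1) unfolding is_domain_def by auto
  have oD: "open D" "D \<noteq> {}" using assms(3) unfolding is_domain_def by auto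
  have fG: "frontier G \<noteq> {}" using frontier_not_empty oG(2) assms(2) by blast
  have fD: "frontier D \<noteq> {}" using frontier_not_empty oD(2) assms(4) by blast
  have h1: "\<forall>x\<in>G. \<forall>y\<in>G. b_metric D p (f x) (f y) \<le> L * b_metric G p x y"
    using assms(8) by blast
  have h2: "\<forall>x\<in>G. \<forall>y\<in>G. b_metric G p x y \<le> L * b_metric D p (f x) (f y)"
  proof (intro ballI)
    fix x y assume "x \<in> G" "y \<in> G"
    then have "b_metric G p x y / L \<le> b_metric D p (f x) (f y)" using assms(8) by blast
    then show "b_metric G p x y \<le> L * b_metric D p (f x) (f y)"
      using Lp by (simp add: pos_divide_le_eq mult.commute)
  qed
  have fxD: "f x \<in> D" if "x \<in> G" for x using assms(6) that by blast
  have inj: "inj_on f G"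
  proof (rule inj_onI)
    fix x y assume x: "x \<in> G" and y: "y \<in> G" and e: "f x = f y"
    obtain d w0 where d: "d > 0" "w0 \<in> frontier G" "dist x w0 = d"
      using near[OF oG(1,2) assms(2) x] by metis
    obtain d' w0' where d': "d' > 0" "\<forall>w\<in>frontier D. d' \<le> dist (f x) w"
      using near[OF oD(1,2) assms(4) fxD[OF x]] by metis
    have "dist (f x) (f y) < d'" using e d' by simp
    from key_ineq[OF p0 L0 fD d'(2) this d(2,3)] h2 x y
    have "dist x y * (d' - dist (f x) (f y)) \<le> L * dist (f x) (f y) * (d + dist x y)" by blast
    then have "dist x y * d' \<le> 0" using e by simp
    then have "dist x y \<le> 0" using d'(1) by (simp add: mult_le_0_iff)
    then show "x = y" by simp
  qed
  define g where "g = inv_into G f"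
  have bij: "bij_betw f G D" using inj assms(6) by (simp add: bij_betw_def)
  have gD: "g ` D = G" using bij_betw_inv_into[OF bij] unfolding g_def bij_betw_def by blast
  have gf: "\<forall>x\<in>G. g (f x) = x" unfolding g_def using inj by simp
  have fg: "\<forall>y\<in>D. f (g y) = y" unfolding g_def using assms(6) f_inv_into_f by metis
  have cf: "continuous_on G f"
  proof (rule cont_from_lip, intro ballI)
    fix x assume x: "x \<in> G"
    show "\<exists>\<delta>>0. \<exists>C. \<forall>y. dist x y < \<delta> \<longrightarrow> dist (f x) (f y) \<le> C * dist x y"
      using local_lip[OF p0 L0 oG(1,2) assms(2) fD x] h1 x by blast
  qed
  have cg: "continuous_on D g"
  proof (rule cont_from_lip, intro ballI)
    fix u assume u: "u \<in> D"
    have gu: "g u \<in> G" using u gD by blast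
    have "\<forall>v\<in>D. b_metric G p (g u) (g v) \<le> L * b_metric D p u v"
    proof
      fix v assume v: "v \<in> D"
      have gv: "g v \<in> G" using v gD by blast
      have "b_metric G p (g u) (g v) \<le> L * b_metric D p (f (g u)) (f (g v))"
        using h2 gu gv by blast
      then show "b_metric G p (g u) (g v) \<le> L * b_metric D p u v" using fg u v by simp
    qed
    then show "\<exists>\<delta>>0. \<exists>C. \<forall>y. dist u y < \<delta> \<longrightarrow> dist (g u) (g y) \<le> C * dist u y"
      using local_lip[OF p0 L0 oD(1,2) assms(4) fG u] by blast
  qed
  have hom: "homeomorphism G D f g"
    unfolding homeomorphism_def using cf cg assms(6) gD gf fg by blast
  have C1: "L\<^sup>2 \<le> 4 powr (1 - 1 / p) * L\<^sup>2"
  proof -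
    have "1 \<le> (4::real) powr (1 - 1 / p)" using assms(5) by (intro ge_one_powr_ge_zero) auto
    then show ?thesis by (simp add: mult_le_cancel_right1)
  qed
  have dil: "\<forall>z\<in>G. lin_dil f z \<le> ereal (4 powr (1 - 1 / p) * L\<^sup>2)"
  proof
    fix z assume z: "z \<in> G"
    have "lin_dil f z \<le> ereal (L\<^sup>2)"
      using dil_bound[where f=f, OF p0 Lp oG(1,2) assms(2) oD(1,2) assms(4) z fxD[OF z]] h1 h2 z by blast
    also have "\<dots> \<le> ereal (4 powr (1 - 1 / p) * L\<^sup>2)" using C1 by simp
    finally show "lin_dil f z \<le> ereal (4 powr (1 - 1 / p) * L\<^sup>2)" .
  qed
  show ?thesis unfolding qc_homeomorphism_def using hom dil by blast
qed

end
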